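(* Let $(L,\le,\wedge,\vee,0,1,{}^\perp)$ be a complete orthocomplemented lattice. Then $(\mathrm{Sub}_{\mathrm{clop}}(\Sigma^L),\le,\wedge,\vee,{}^\bullet)$ is a De Morgan algebra if and only if $(\mathrm{Sub}_{\mathrm{clop}}(\Sigma^L),\le,\wedge,\vee,\varnothing,\Sigma^L,{}^\bullet)$ is a boolean lattice; likewise $(\mathrm{Sub}_{\mathrm{clop}}(\Sigma^L),\le,\wedge,\vee,{}^\circ)$ is a De Morgan algebra if and only if $(\mathrm{Sub}_{\mathrm{clop}}(\Sigma^L),\le,\wedge,\vee,\varnothing,\Sigma^L,{}^\circ)$ is a boolean lattice.
   Context: Let $(L,\le,\wedge,\vee,0,1,{}^\perp)$ be a complete orthocomplemented lattice (bounded lattice with ${}^\perp$ antitone, $x^{\perp\perp}=x$, $x\wedge x^\perp=0$, $x\vee x^\perp=1$, all subsets having meets and joins). $\mathcal{V}_c(L)$ is the set of complete boolean sublattices of $L$ (containing $0,1$, closed under ${}^\perp$ and arbitrary meets and joins of $L$), other than $\{0,1\}$, ordered by inclusion. For a boolean lattice $V$, $\mathrm{sp}(V)$ is its Stone spectrum (boolean homomorphisms $V\to\{0,1\}$) with the Stone topology with basis $\varkappa_V(a):=\{\xi\in\mathrm{sp}(V)\mid\xi(a)=1\}$, $a\in V$. The spectral presheaf $\Sigma^L$ sends $V\mapsto\mathrm{sp}(V)$ and $V\subseteq W$ to restriction $\lambda\mapsto\lambda|_V$. $\mathrm{Sub}_{\mathrm{clop}}(\Sigma^L)$: subpresheaves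 $S$ with each $S_V$ clopen; complete distributive lattice with componentwise inclusion order, bottom $\varnothing$, top $\Sigma^L$, $(\bigwedge_i S^i)_V=\mathrm{int}(\bigcap_i S^i_V)$, $(\bigvee_i S^i)_V=\mathrm{cl}(\bigcup_i S^i_V)$. Daseinisations: $\delta^\wedge(a)_V:=\varkappa_V(\bigwedge\{b\in V\mid a\le b\})$, $\delta^\vee(a)_V:=\varkappa_V(\bigvee\{b\in V\mid b\le a\})$; $\varepsilon^\wedge(S):=\bigvee\{a\in L\mid\delta^\wedge(a)\le S\}$, $\varepsilon^\vee(S):=\bigwedge\{a\in L\mid S\le\delta^\vee(a)\}$; $S^\bullet:=\delta^\wedge((\varepsilon^\wedge(S))^\perp)$, $S^\circ:=\delta^\vee((\varepsilon^\vee(S))^\perp)$. A De Morgan algebra is a distributive lattice with a map ${}^\neg$ that is an involution: $x\le y\Rightarrow y^\neg\le x^\neg$, $x\le x^{\neg\neg}$, $x^{\neg\neg}\le x$. A boolean lattice is a bounded distributive lattice with an orthocomplementation (antitone, $x^{\neg\neg}=x$, $x\wedge x^\neg=0$, $x\vee x^\neg=1$). *)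

theory Defs
  imports "HOL-Analysis.Abstract_Topology"
begin

definition ortho_compl :: "('a::complete_lattice \<Rightarrow> 'a) \<Rightarrow> bool" where
  "ortho_compl oc \<longleftrightarrow>
     (\<forall>x y. x \<le> y \<longrightarrow> oc y \<le> oc x) \<and>
     (\<forall>x. oc (oc x) = x) \<and>
     (\<forall>x. inf x (oc x) = bot) \<and>
     (\<forall>x. sup x (oc x) = top)"

definition Vc :: "('a::complete_lattice \<Rightarrow> 'a) \<Rightarrow> 'a set set" where
  "Vc oc = {V. bot \<in> V \<and> top \<in> V \<and>
              (\<forall>x\<in>V. oc x \<in> V) \<and>
              (\<forall>X. X \<subseteq> V \<longrightarrow> Inf X \<in> V \<and> Sup X \<in> V) \<and>
              (\<forall>x\<in>V. \<forall>y\<in>V. \<forall>z\<in>V. inf x (sup y z) = sup (inf x y) (inf x z)) \<and>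
              V \<noteq> {bot, top}}"

text \<open>Boolean homomorphisms V -> {0,1}, represented as predicates that are False outside V.\<close>

definition sp :: "'a::complete_lattice set \<Rightarrow> ('a \<Rightarrow> bool) set" where
  "sp V = {\<xi>. \<not> \<xi> bot \<and> \<xi> top \<and>
             (\<forall>x\<in>V. \<forall>y\<in>V. \<xi> (inf x y) = (\<xi> x \<and> \<xi> y) \<and> \<xi> (sup x y) = (\<xi> x \<or> \<xi> y)) \<and>
             (\<forall>x. x \<notin> V \<longrightarrow> \<not> \<xi> x)}"

definition kappa :: "'a::complete_lattice set \<Rightarrow> 'a \<Rightarrow> ('a \<Rightarrow> bool) set" where
  "kappa V a = {\<xi> \<in> sp V. \<xi> a}"

definition stone_top :: "'a::complete_lattice set \<Rightarrow> ('a \<Rightarrow> bool) topology" where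
  "stone_top V = topology_generated_by (kappa V ` V)"

definition restr :: "'a set \<Rightarrow> ('a \<Rightarrow> bool) \<Rightarrow> ('a \<Rightarrow> bool)" where
  "restr V l = (\<lambda>x. x \<in> V \<and> l x)"

type_synonym 'a presheaf = "'a set \<Rightarrow> ('a \<Rightarrow> bool) set"

text \<open>Presheaves are represented extensionally: empty outside V_c(L).  Order is the
  componentwise inclusion, i.e. the pointwise order on functions.\<close>

definition SubClop :: "('a::complete_lattice \<Rightarrow> 'a) \<Rightarrow> 'a presheaf set" where
  "SubClop oc = {S.
     (\<forall>V. V \<notin> Vc oc \<longrightarrow> S V = {}) \<and>
     (\<forall>V \<in> Vc oc. S V \<subseteq> sp V \<and> openin (stone_top V) (S V) \<and> closedin (stone_top V) (S V)) \<and>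
     (\<forall>V \<in> Vc oc. \<forall>W \<in> Vc oc. V \<subseteq> W \<longrightarrow> (\<forall>l \<in> S W. restr V l \<in> S V))}"

definition ps_bot :: "'a::complete_lattice presheaf" where
  "ps_bot = (\<lambda>V. {})"

definition ps_top :: "('a::complete_lattice \<Rightarrow> 'a) \<Rightarrow> 'a presheaf" where
  "ps_top oc = (\<lambda>V. if V \<in> Vc oc then sp V else {})"

definition ps_meet :: "'a::complete_lattice presheaf \<Rightarrow> 'a presheaf \<Rightarrow> 'a presheaf" where
  "ps_meet S T = (\<lambda>V. (stone_top V) interior_of (S V \<inter> T V))"

definition ps_join :: "'a::complete_lattice presheaf \<Rightarrow> 'a presheaf \<Rightarrow> 'a presheaf" where
  "ps_join S T = (\<lambda>V. (stone_top V) closure_of (S V \<union> T V))"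

definition dasein_out :: "('a::complete_lattice \<Rightarrow> 'a) \<Rightarrow> 'a \<Rightarrow> 'a presheaf" where
  "dasein_out oc a = (\<lambda>V. if V \<in> Vc oc then kappa V (Inf {b \<in> V. a \<le> b}) else {})"

definition dasein_in :: "('a::complete_lattice \<Rightarrow> 'a) \<Rightarrow> 'a \<Rightarrow> 'a presheaf" where
  "dasein_in oc a = (\<lambda>V. if V \<in> Vc oc then kappa V (Sup {b \<in> V. b \<le> a}) else {})"

definition eps_out :: "('a::complete_lattice \<Rightarrow> 'a) \<Rightarrow> 'a presheaf \<Rightarrow> 'a" where
  "eps_out oc S = Sup {a. dasein_out oc a \<le> S}"

definition eps_in :: "('a::complete_lattice \<Rightarrow> 'a) \<Rightarrow> 'a presheaf \<Rightarrow> 'a" where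
  "eps_in oc S = Inf {a. S \<le> dasein_in oc a}"

definition bullet :: "('a::complete_lattice \<Rightarrow> 'a) \<Rightarrow> 'a presheaf \<Rightarrow> 'a presheaf" where
  "bullet oc S = dasein_out oc (oc (eps_out oc S))"

definition circ :: "('a::complete_lattice \<Rightarrow> 'a) \<Rightarrow> 'a presheaf \<Rightarrow> 'a presheaf" where
  "circ oc S = dasein_in oc (oc (eps_in oc S))"

definition lattice_on :: "'b set \<Rightarrow> ('b \<Rightarrow> 'b \<Rightarrow> bool) \<Rightarrow> ('b \<Rightarrow> 'b \<Rightarrow> 'b) \<Rightarrow> ('b \<Rightarrow> 'b \<Rightarrow> 'b) \<Rightarrow> bool" where
  "lattice_on C le meet join \<longleftrightarrow>
     (\<forall>x\<in>C. le x x) \<and>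
     (\<forall>x\<in>C. \<forall>y\<in>C. le x y \<and> le y x \<longrightarrow> x = y) \<and>
     (\<forall>x\<in>C. \<forall>y\<in>C. \<forall>z\<in>C. le x y \<and> le y z \<longrightarrow> le x z) \<and>
     (\<forall>x\<in>C. \<forall>y\<in>C. meet x y \<in> C \<and> le (meet x y) x \<and> le (meet x y) y \<and>
                    (\<forall>z\<in>C. le z x \<and> le z y \<longrightarrow> le z (meet x y))) \<and>
     (\<forall>x\<in>C. \<forall>y\<in>C. join x y \<in> C \<and> le x (join x y) \<and> le y (join x y) \<and>
                    (\<forall>z\<in>C. le x z \<and> le y z \<longrightarrow> le (join x y) z))"

definition distrib_lattice_on :: "'b set \<Rightarrow> ('b \<Rightarrow> 'b \<Rightarrow> bool) \<Rightarrow> ('b \<Rightarrow> 'b \<Rightarrow> 'b) \<Rightarrow> ('b \<Rightarrow> 'b \<Rightarrow> 'b) \<Rightarrow> bool" where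
  "distrib_lattice_on C le meet join \<longleftrightarrow> lattice_on C le meet join \<and>
     (\<forall>x\<in>C. \<forall>y\<in>C. \<forall>z\<in>C. meet x (join y z) = join (meet x y) (meet x z))"

definition de_morgan_algebra :: "'b set \<Rightarrow> ('b \<Rightarrow> 'b \<Rightarrow> bool) \<Rightarrow> ('b \<Rightarrow> 'b \<Rightarrow> 'b) \<Rightarrow> ('b \<Rightarrow> 'b \<Rightarrow> 'b) \<Rightarrow> ('b \<Rightarrow> 'b) \<Rightarrow> bool" where
  "de_morgan_algebra C le meet join neg \<longleftrightarrow> distrib_lattice_on C le meet join \<and>
     (\<forall>x\<in>C. neg x \<in> C) \<and>
     (\<forall>x\<in>C. \<forall>y\<in>C. le x y \<longrightarrow> le (neg y) (neg x)) \<and>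
     (\<forall>x\<in>C. le x (neg (neg x))) \<and>
     (\<forall>x\<in>C. le (neg (neg x)) x)"

definition boolean_lattice_on :: "'b set \<Rightarrow> ('b \<Rightarrow> 'b \<Rightarrow> bool) \<Rightarrow> ('b \<Rightarrow> 'b \<Rightarrow> 'b) \<Rightarrow> ('b \<Rightarrow> 'b \<Rightarrow> 'b) \<Rightarrow> 'b \<Rightarrow> 'b \<Rightarrow> ('b \<Rightarrow> 'b) \<Rightarrow> bool" where
  "boolean_lattice_on C le meet join bt tp neg \<longleftrightarrow> distrib_lattice_on C le meet join \<and>
     bt \<in> C \<and> tp \<in> C \<and> (\<forall>x\<in>C. le bt x \<and> le x tp) \<and>
     (\<forall>x\<in>C. neg x \<in> C) \<and>
     (\<forall>x\<in>C. \<forall>y\<in>C. le x y \<longrightarrow> le (neg y) (neg x)) \<and>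
     (\<forall>x\<in>C. neg (neg x) = x) \<and>
     (\<forall>x\<in>C. meet x (neg x) = bt) \<and>
     (\<forall>x\<in>C. join x (neg x) = tp)"

end

theory Submission
  imports Defs
begin


lemma Vc_props:
  assumes "V \<in> Vc oc"
  shows "bot \<in> V" "top \<in> V" "\<And>x. x \<in> V \<Longrightarrow> oc x \<in> V"
    "\<And>X. X \<subseteq> V \<Longrightarrow> Inf X \<in> V" "\<And>X. X \<subseteq> V \<Longrightarrow> Sup X \<in> V"
    "\<And>x y z. x \<in> V \<Longrightarrow> y \<in> V \<Longrightarrow> z \<in> V \<Longrightarrow> inf x (sup y z) = sup (inf x y) (inf x z)"
    "V \<noteq> {bot, top}"
  using assms unfolding Vc_def by auto

lemma Vc_inf: "V \<in> Vc oc \<Longrightarrow> x \<in> V \<Longrightarrow> y \<in> V \<Longrightarrow> inf x y \<in> V"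
  using Vc_props(4)[of V oc "{x,y}"] by simp

lemma Vc_sup: "V \<in> Vc oc \<Longrightarrow> x \<in> V \<Longrightarrow> y \<in> V \<Longrightarrow> sup x y \<in> V"
  using Vc_props(5)[of V oc "{x,y}"] by simp

lemma Vc_bot_ne_top: "(V::'a::complete_lattice set) \<in> Vc oc \<Longrightarrow> (bot::'a) \<noteq> top"
proof
  assume V: "V \<in> Vc oc" and e: "(bot::'a) = top"
  have "\<And>x::'a. x = bot" using e by (metis bot.extremum top.extremum_unique)
  then have "\<And>x. x \<in> V \<longleftrightarrow> x \<in> {bot, top}" using Vc_props(1)[OF V] by (metis insertI1)
  then have "V = {bot, top}" by blast
  then show False using Vc_props(7)[OF V] by simp
qed

lemma ultrafilter:
  fixes z :: "'a::complete_lattice"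
  assumes V: "V \<in> Vc oc" and zV: "z \<in> V" and zb: "z \<noteq> bot"
  shows "\<exists>\<xi>\<in>sp V. \<xi> z"
proof -
  define A where "A = {F. F \<subseteq> V \<and> bot \<notin> F \<and> z \<in> F \<and> (\<forall>x\<in>F. \<forall>y\<in>F. inf x y \<in> F)
     \<and> (\<forall>x\<in>F. \<forall>y\<in>V. x \<le> y \<longrightarrow> y \<in> F)}"
  define P where "P = {y \<in> V. z \<le> y}"
  have PA: "P \<in> A" unfolding A_def P_def using zV zb Vc_inf[OF V] bot.extremum_unique
    by (auto intro: order_trans)
  have "\<exists>M\<in>A. \<forall>X\<in>A. M \<subseteq> X \<longrightarrow> X = M"
  proof (rule Zorn_Lemma2, intro ballI)
    fix C assume C: "C \<in> chains A"
    show "\<exists>U\<in>A. \<forall>X\<in>C. X \<subseteq> U"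
    proof (cases "C = {}")
      case True then show ?thesis using PA by auto
    next
      case False
      have CA: "C \<subseteq> A" and ch: "\<forall>x\<in>C. \<forall>y\<in>C. x \<subseteq> y \<or> y \<subseteq> x"
        using C unfolding chains_def chain_subset_def by auto
      have "\<Union>C \<in> A"
        unfolding A_def
      proof (intro CollectI conjI ballI impI)
        show "\<Union>C \<subseteq> V" using CA unfolding A_def by auto
        show "bot \<notin> \<Union>C" using CA unfolding A_def by auto
        show "z \<in> \<Union>C" using CA False unfolding A_def by auto
      next
        fix x y assume "x \<in> \<Union>C" "y \<in> \<Union>C"
        then obtain F G where F: "F \<in> C" "x \<in> F" and G: "G \<in> C" "y \<in> G" by auto
        from ch F G have "x \<in> G \<and> y \<in> G \<or> x \<in> F \<and> y \<in> F" by blast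
        then show "inf x y \<in> \<Union>C" using F G CA unfolding A_def by blast
      next
        fix x y assume "x \<in> \<Union>C" "y \<in> V" "x \<le> y"
        then show "y \<in> \<Union>C" using CA unfolding A_def by blast
      qed
      then show ?thesis by auto
    qed
  qed
  then obtain F where FA: "F \<in> A" and Fmax: "\<And>G. G \<in> A \<Longrightarrow> F \<subseteq> G \<Longrightarrow> G = F" by blast
  have FV: "F \<subseteq> V" and Fb: "bot \<notin> F" and zF: "z \<in> F"
    and Finf: "\<And>x y. x \<in> F \<Longrightarrow> y \<in> F \<Longrightarrow> inf x y \<in> F"
    and Fup: "\<And>x y. x \<in> F \<Longrightarrow> y \<in> V \<Longrightarrow> x \<le> y \<Longrightarrow> y \<in> F"
    using FA unfolding A_def by auto
  have topF: "top \<in> F" using Fup[OF zF Vc_props(2)[OF V]] by simp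
  have key: "\<exists>f\<in>F. inf f x = bot" if xV: "x \<in> V" and xF: "x \<notin> F" for x
  proof (rule ccontr)
    assume nb: "\<not> (\<exists>f\<in>F. inf f x = bot)"
    define G where "G = {w \<in> V. \<exists>f\<in>F. inf f x \<le> w}"
    have "G \<in> A" unfolding A_def
    proof (intro CollectI conjI ballI impI)
      show "G \<subseteq> V" unfolding G_def by auto
      show "bot \<notin> G" unfolding G_def using nb bot.extremum_unique by auto
      show "z \<in> G" unfolding G_def using zV zF by (auto intro: le_infI1)
    next
      fix a b assume "a \<in> G" "b \<in> G"
      then obtain f g where a: "a \<in> V" "f \<in> F" "inf f x \<le> a" and b: "b \<in> V" "g \<in> F" "inf g x \<le> b"
        unfolding G_def by auto
      have "inf (inf f g) x \<le> inf a b" using a(3) b(3)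
        by (meson inf_le1 inf_le2 le_inf_iff order_trans)
      then show "inf a b \<in> G" unfolding G_def using Vc_inf[OF V a(1) b(1)] Finf[OF a(2) b(2)] by blast
    next
      fix a b assume "a \<in> G" "b \<in> V" "a \<le> b"
      then show "b \<in> G" unfolding G_def by (auto intro: order_trans)
    qed
    moreover have "F \<subseteq> G" unfolding G_def using FV by (auto intro: le_infI1)
    ultimately have "G = F" using Fmax by blast
    moreover have "x \<in> G" unfolding G_def using xV topF by (intro CollectI conjI bexI[of _ top]) auto
    ultimately show False using xF by simp
  qed
  define \<xi> where "\<xi> = (\<lambda>x. x \<in> F)"
  have "\<xi> \<in> sp V" unfolding sp_def
  proof (intro CollectI conjI ballI allI impI)
    show "\<not> \<xi> bot" using Fb \<xi>_def by simp
    show "\<xi> top" using topF \<xi>_def by simp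
  next
    fix x y assume xV: "x \<in> V" and yV: "y \<in> V"
    show "\<xi> (inf x y) = (\<xi> x \<and> \<xi> y)" unfolding \<xi>_def
      using Finf Fup xV yV Vc_inf[OF V xV yV] by (meson inf_le1 inf_le2)
    show "\<xi> (sup x y) = (\<xi> x \<or> \<xi> y)" unfolding \<xi>_def
    proof
      assume s: "sup x y \<in> F"
      show "x \<in> F \<or> y \<in> F"
      proof (rule ccontr)
        assume "\<not> (x \<in> F \<or> y \<in> F)"
        then obtain f g where f: "f \<in> F" "inf f x = bot" and g: "g \<in> F" "inf g y = bot"
          using key xV yV by blast
        have hV: "inf f g \<in> V" using FV f g Vc_inf[OF V] by blast
        have "inf (inf f g) (sup x y) = sup (inf (inf f g) x) (inf (inf f g) y)"
          using Vc_props(6)[OF V hV xV yV] .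
        also have "\<dots> = bot"
        proof -
          have "inf (inf f g) x = bot" using f(2) by (metis inf.assoc inf.commute inf_bot_right)
          moreover have "inf (inf f g) y = bot" using g(2) by (metis inf.assoc inf_bot_right)
          ultimately show ?thesis by simp
        qed
        finally have "bot \<in> F" using Finf[OF Finf[OF f(1) g(1)] s] by simp
        then show False using Fb by simp
      qed
    next
      assume "x \<in> F \<or> y \<in> F"
      then show "sup x y \<in> F" using Fup Vc_sup[OF V xV yV] by (meson sup_ge1 sup_ge2)
    qed
  next
    fix x assume "x \<notin> V" then show "\<not> \<xi> x" using FV \<xi>_def by auto
  qed
  moreover have "\<xi> z" using zF \<xi>_def by simp
  ultimately show ?thesis by blast
qed


lemma oc_facts:
  fixes oc :: "'a::complete_lattice \<Rightarrow> 'a"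
  assumes "ortho_compl oc"
  shows "oc top = bot" "oc bot = top" "\<And>x y. x \<le> y \<Longrightarrow> oc y \<le> oc x" "\<And>x. oc (oc x) = x"
    "\<And>x. inf x (oc x) = bot" "\<And>x. sup x (oc x) = top"
  using assms unfolding ortho_compl_def
  by (metis inf_top_left, metis sup_bot_left, auto)

lemma topspace_stone:
  assumes "top \<in> V"
  shows "topspace (stone_top V) = sp V"
  using assms unfolding stone_top_def kappa_def sp_def by auto

lemma sp_oc:
  assumes oc: "ortho_compl oc" and V: "V \<in> Vc oc" and xi: "\<xi> \<in> sp V" and x: "x \<in> V"
  shows "\<xi> (oc x) = (\<not> \<xi> x)"
proof -
  have ox: "oc x \<in> V" using Vc_props(3)[OF V x] .
  have "\<xi> (inf x (oc x)) = (\<xi> x \<and> \<xi> (oc x))" "\<xi> (sup x (oc x)) = (\<xi> x \<or> \<xi> (oc x))"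
    using xi x ox unfolding sp_def by auto
  moreover have "\<not> \<xi> bot" "\<xi> top" using xi unfolding sp_def by auto
  ultimately show ?thesis using oc_facts(5,6)[OF oc, of x] by auto
qed

lemma sp_mono:
  assumes xi: "\<xi> \<in> sp V" and x: "x \<in> V" and y: "y \<in> V" and le: "x \<le> y" and "\<xi> x"
  shows "\<xi> y"
proof -
  have "\<xi> (inf x y) = (\<xi> x \<and> \<xi> y)" using xi x y unfolding sp_def by auto
  then show ?thesis using le assms(5) by (simp add: inf.absorb1)
qed

lemma kappa_mono:
  "x \<in> V \<Longrightarrow> y \<in> V \<Longrightarrow> x \<le> y \<Longrightarrow> kappa V x \<subseteq> kappa V y"
  unfolding kappa_def using sp_mono by blast

lemma kappa_sub: "kappa V x \<subseteq> sp V"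
  unfolding kappa_def by auto

lemma kappa_bot: "kappa V bot = {}"
  unfolding kappa_def sp_def by auto

lemma kappa_top: "kappa V top = sp V"
  unfolding kappa_def sp_def by auto

lemma kappa_oc:
  assumes oc: "ortho_compl oc" and V: "V \<in> Vc oc" and x: "x \<in> V"
  shows "kappa V (oc x) = sp V - kappa V x"
  unfolding kappa_def using sp_oc[OF oc V _ x] by auto

lemma kappa_empty:
  assumes V: "V \<in> Vc oc" and x: "x \<in> V" and e: "kappa V x = {}"
  shows "x = bot"
  using ultrafilter[OF V x] e unfolding kappa_def by auto

lemma kappa_full:
  assumes oc: "ortho_compl oc" and V: "V \<in> Vc oc" and x: "x \<in> V" and e: "kappa V x = sp V"
  shows "x = top"
proof -
  have "kappa V (oc x) = {}" using kappa_oc[OF oc V x] e by simp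
  then have "oc x = bot" using kappa_empty[OF V Vc_props(3)[OF V x]] by simp
  then show ?thesis using oc_facts(2,4)[OF oc] by metis
qed

lemma sp_nonempty:
  assumes V: "V \<in> Vc oc" shows "sp V \<noteq> {}"
  using ultrafilter[OF V Vc_props(2)[OF V] Vc_bot_ne_top[OF V, symmetric]] by auto

lemma restr_sp:
  assumes V: "V \<in> Vc oc" and VW: "V \<subseteq> W" and l: "l \<in> sp W"
  shows "restr V l \<in> sp V"
proof -
  have "\<forall>x\<in>V. \<forall>y\<in>V. inf x y \<in> V \<and> sup x y \<in> V" using Vc_inf[OF V] Vc_sup[OF V] by blast
  then show ?thesis
    using l VW Vc_props(1,2)[OF V] unfolding sp_def restr_def by (auto 0 3)
qed

lemma restr_self: "l \<in> sp V \<Longrightarrow> restr V l = l"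
  unfolding restr_def sp_def by auto

lemma ps_bot_in: "ps_bot \<in> SubClop oc"
  unfolding SubClop_def ps_bot_def by auto

lemma ps_top_in: "ps_top oc \<in> SubClop oc"
  unfolding SubClop_def
proof (intro CollectI conjI ballI allI impI)
  fix V assume V: "V \<in> Vc oc"
  have ts: "topspace (stone_top V) = sp V" using topspace_stone[OF Vc_props(2)[OF V]] .
  show "ps_top oc V \<subseteq> sp V" unfolding ps_top_def by auto
  show "openin (stone_top V) (ps_top oc V)"
    using openin_topspace[of "stone_top V"] ts V unfolding ps_top_def by auto
  show "closedin (stone_top V) (ps_top oc V)"
    using closedin_topspace[of "stone_top V"] ts V unfolding ps_top_def by auto
next
  fix V W l assume V: "V \<in> Vc oc" and W: "W \<in> Vc oc" and VW: "V \<subseteq> W"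
    and l: "l \<in> ps_top oc W"
  then show "restr V l \<in> ps_top oc V"
    using restr_sp[OF V VW] unfolding ps_top_def by auto
qed (auto simp: ps_top_def)

lemma downset_in:
  assumes V1: "V1 \<in> Vc oc"
  shows "(\<lambda>W. if W \<in> Vc oc \<and> W \<subseteq> V1 then sp W else {}) \<in> SubClop oc"
  unfolding SubClop_def
proof (intro CollectI conjI ballI allI impI)
  fix V assume V: "V \<in> Vc oc"
  have ts: "topspace (stone_top V) = sp V" using topspace_stone[OF Vc_props(2)[OF V]] .
  show "(if V \<in> Vc oc \<and> V \<subseteq> V1 then sp V else {}) \<subseteq> sp V" by auto
  show "openin (stone_top V) (if V \<in> Vc oc \<and> V \<subseteq> V1 then sp V else {})"
    using openin_topspace[of "stone_top V"] ts by auto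
  show "closedin (stone_top V) (if V \<in> Vc oc \<and> V \<subseteq> V1 then sp V else {})"
    using closedin_topspace[of "stone_top V"] ts by auto
next
  fix V W l assume V: "V \<in> Vc oc" and W: "W \<in> Vc oc" and VW: "V \<subseteq> W"
    and l: "l \<in> (if W \<in> Vc oc \<and> W \<subseteq> V1 then sp W else {})"
  then show "restr V l \<in> (if V \<in> Vc oc \<and> V \<subseteq> V1 then sp V else {})"
    using restr_sp[OF V VW] by (auto split: if_splits)
qed auto




lemma red_bullet:
  fixes oc :: "'a::complete_lattice \<Rightarrow> 'a"
  assumes oc: "ortho_compl oc" and inv: "\<forall>S\<in>SubClop oc. bullet oc (bullet oc S) = S"
    and V1: "V1 \<in> Vc oc" and V2: "V2 \<in> Vc oc" and n: "\<not> V2 \<subseteq> V1"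
  shows False
proof -
  define S :: "'a presheaf" where "S = (\<lambda>W. if W \<in> Vc oc \<and> W \<subseteq> V1 then sp W else {})"
  have SC: "S \<in> SubClop oc" unfolding S_def by (rule downset_in[OF V1])
  define c where "c = oc (eps_out oc (bullet oc S))"
  have Sd: "S = dasein_out oc c" using inv SC unfolding c_def bullet_def by metis
  define m where "m = Inf {b \<in> V2. c \<le> b}"
  have mV: "m \<in> V2" unfolding m_def by (rule Vc_props(4)[OF V2]) auto
  have "kappa V2 m = {}" using fun_cong[OF Sd, of V2] V2 n unfolding S_def dasein_out_def m_def by auto
  then have "m = bot" using kappa_empty[OF V2 mV] by simp
  moreover have "c \<le> m" unfolding m_def by (rule Inf_greatest) auto
  ultimately have c: "c = bot" using bot.extremum_unique by blast
  have "Inf {b \<in> V1. c \<le> b} = bot" using c Vc_props(1)[OF V1]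
    by (metis (mono_tags, lifting) Inf_lower bot.extremum bot.extremum_unique mem_Collect_eq)
  then have "sp V1 = {}" using fun_cong[OF Sd, of V1] V1 kappa_bot unfolding S_def dasein_out_def by auto
  then show False using sp_nonempty[OF V1] by simp
qed

lemma red_circ:
  fixes oc :: "'a::complete_lattice \<Rightarrow> 'a"
  assumes oc: "ortho_compl oc" and inv: "\<forall>S\<in>SubClop oc. circ oc (circ oc S) = S"
    and V1: "V1 \<in> Vc oc" and V2: "V2 \<in> Vc oc" and n: "\<not> V2 \<subseteq> V1"
  shows False
proof -
  define S :: "'a presheaf" where "S = (\<lambda>W. if W \<in> Vc oc \<and> W \<subseteq> V1 then sp W else {})"
  have SC: "S \<in> SubClop oc" unfolding S_def by (rule downset_in[OF V1])
  define c where "c = oc (eps_in oc (circ oc S))"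
  have Sd: "S = dasein_in oc c" using inv SC unfolding c_def circ_def by metis
  define m where "m = Sup {b \<in> V1. b \<le> c}"
  have mV: "m \<in> V1" unfolding m_def by (rule Vc_props(5)[OF V1]) auto
  have "kappa V1 m = sp V1" using fun_cong[OF Sd, of V1] V1 unfolding S_def dasein_in_def m_def by auto
  then have "m = top" using kappa_full[OF oc V1 mV] by simp
  moreover have "m \<le> c" unfolding m_def by (rule Sup_least) auto
  ultimately have c: "c = top" using top.extremum_unique by blast
  have "Sup {b \<in> V2. b \<le> c} = top" using c Vc_props(2)[OF V2]
    by (metis (mono_tags, lifting) Sup_upper top.extremum top.extremum_unique mem_Collect_eq)
  then have "sp V2 = {}" using fun_cong[OF Sd, of V2] V2 n kappa_top unfolding S_def dasein_in_def by auto
  then show False using sp_nonempty[OF V2] by simp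
qed

lemma uniq_of_red:
  assumes "\<And>V1 V2. V1 \<in> Vc oc \<Longrightarrow> V2 \<in> Vc oc \<Longrightarrow> \<not> V2 \<subseteq> V1 \<Longrightarrow> False"
  shows "\<forall>V1\<in>Vc oc. \<forall>V2\<in>Vc oc. V1 = V2"
  using assms by blast

lemma single_eq:
  assumes S: "S \<in> SubClop oc" and uniq: "\<forall>V\<in>Vc oc. V = V0"
  shows "S = (\<lambda>V. if V = V0 then S V0 else {})"
proof
  fix V
  show "S V = (if V = V0 then S V0 else {})"
  proof (cases "V = V0")
    case False
    then have "V \<notin> Vc oc" using uniq by blast
    then show ?thesis using S False unfolding SubClop_def by simp
  qed simp
qed

lemma single_le:
  assumes S: "S \<in> SubClop oc" and T: "T \<in> SubClop oc" and uniq: "\<forall>V\<in>Vc oc. V = V0"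
  shows "S \<le> T \<longleftrightarrow> S V0 \<subseteq> T V0"
proof
  assume "S \<le> T" then show "S V0 \<subseteq> T V0" by (simp add: le_fun_def)
next
  assume a: "S V0 \<subseteq> T V0"
  show "S \<le> T"
  proof (rule le_funI)
    fix V show "S V \<le> T V"
      using a single_eq[OF S uniq] by (cases "V = V0") (simp, metis empty_subsetI)
  qed
qed

lemma single_mk:
  assumes V0: "V0 \<in> Vc oc" and uniq: "\<forall>V\<in>Vc oc. V = V0"
    and A: "A \<subseteq> sp V0" "openin (stone_top V0) A" "closedin (stone_top V0) A"
  shows "(\<lambda>V. if V = V0 then A else {}) \<in> SubClop oc"
  unfolding SubClop_def mem_Collect_eq
proof (intro conjI ballI allI impI)
  fix V assume "V \<notin> Vc oc" then show "(if V = V0 then A else {}) = {}" using V0 by auto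
next
  fix V assume "V \<in> Vc oc" then have "V = V0" using uniq by blast
  then show "(if V = V0 then A else {}) \<subseteq> sp V" "openin (stone_top V) (if V = V0 then A else {})"
    "closedin (stone_top V) (if V = V0 then A else {})" using A by simp_all
next
  fix V W l assume V: "V \<in> Vc oc" and W: "W \<in> Vc oc" and VW: "V \<subseteq> W"
    and l: "l \<in> (if W = V0 then A else {})"
  have "V = V0" "W = V0" using V W uniq by blast+
  then show "restr V l \<in> (if V = V0 then A else {})"
    using l A(1) restr_self[of l V0] by auto
qed



lemma SubClop_comp:
  assumes "S \<in> SubClop oc" "V \<in> Vc oc"
  shows "S V \<subseteq> sp V" "openin (stone_top V) (S V)" "closedin (stone_top V) (S V)"
  using assms unfolding SubClop_def by auto

lemma Inf_self: "x \<in> V \<Longrightarrow> Inf {b \<in> V. (x::'a::complete_lattice) \<le> b} = x"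
  by (rule antisym) (auto intro: Inf_lower Inf_greatest)

lemma Sup_self: "x \<in> V \<Longrightarrow> Sup {b \<in> V. b \<le> (x::'a::complete_lattice)} = x"
  by (rule antisym) (auto intro: Sup_upper Sup_least)

lemma core_bullet:
  fixes oc :: "'a::complete_lattice \<Rightarrow> 'a"
  assumes oc: "ortho_compl oc" and V0: "V0 \<in> Vc oc" and uniq: "\<forall>V\<in>Vc oc. V = V0"
   and closed: "\<forall>S\<in>SubClop oc. bullet oc S \<in> SubClop oc"
   and anti: "\<forall>S\<in>SubClop oc. \<forall>T\<in>SubClop oc. S \<le> T \<longrightarrow> bullet oc T \<le> bullet oc S"
   and inv: "\<forall>S\<in>SubClop oc. bullet oc (bullet oc S) = S"
   and S: "S \<in> SubClop oc"
  shows "S V0 \<inter> bullet oc S V0 = {} \<and> S V0 \<union> bullet oc S V0 = sp V0"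
proof -
  let ?X = "sp V0"
  let ?N = "bullet oc"
  have ts: "topspace (stone_top V0) = ?X" using topspace_stone[OF Vc_props(2)[OF V0]] .
  have rep: "\<exists>x\<in>V0. R V0 = kappa V0 x" if R: "R \<in> SubClop oc" for R
  proof -
    define c where "c = oc (eps_out oc (?N R))"
    have "R = dasein_out oc c" using inv R unfolding c_def bullet_def by metis
    then have "R V0 = kappa V0 (Inf {b \<in> V0. c \<le> b})" using V0 unfolding dasein_out_def by simp
    moreover have "Inf {b \<in> V0. c \<le> b} \<in> V0" by (rule Vc_props(4)[OF V0]) auto
    ultimately show ?thesis by blast
  qed
  have disj: "R V0 \<inter> ?N R V0 = {}" if R: "R \<in> SubClop oc" for R
  proof -
    obtain x where xV: "x \<in> V0" and Rx: "R V0 = kappa V0 x" using rep[OF R] by blast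
    have "dasein_out oc x \<le> R"
    proof (rule le_funI)
      fix V show "dasein_out oc x V \<le> R V"
      proof (cases "V \<in> Vc oc")
        case True then have "V = V0" using uniq by blast
        then show ?thesis using True Rx Inf_self[OF xV] unfolding dasein_out_def by simp
      qed (simp add: dasein_out_def)
    qed
    then have "x \<le> eps_out oc R" unfolding eps_out_def by (auto intro: Sup_upper)
    then have "oc (eps_out oc R) \<le> oc x" using oc_facts(3)[OF oc] by blast
    then have "Inf {b \<in> V0. oc (eps_out oc R) \<le> b} \<le> oc x"
      using Vc_props(3)[OF V0 xV] by (auto intro: Inf_lower)
    then have "?N R V0 \<subseteq> kappa V0 (oc x)" unfolding bullet_def dasein_out_def using V0
      by (simp add: kappa_mono Vc_props(3)[OF V0 xV] Vc_props(4)[OF V0])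
    then show ?thesis using kappa_oc[OF oc V0 xV] Rx by auto
  qed
  have Ntop: "?N (ps_top oc) = ps_bot"
  proof
    fix V
    have "dasein_out oc top \<le> ps_top oc" unfolding dasein_out_def ps_top_def le_fun_def
      using kappa_sub by auto
    then have "eps_out oc (ps_top oc) = top" unfolding eps_out_def by (metis (mono_tags, lifting) Sup_upper mem_Collect_eq top.extremum_unique)
    then have "oc (eps_out oc (ps_top oc)) = bot" using oc_facts(1)[OF oc] by simp
    moreover have "\<And>W. W \<in> Vc oc \<Longrightarrow> Inf {b \<in> W. bot \<le> b} = bot" using Inf_self Vc_props(1) by metis
    ultimately show "?N (ps_top oc) V = ps_bot V" unfolding bullet_def dasein_out_def ps_bot_def
      by (simp add: kappa_bot)
  qed
  have Nbot: "?N ps_bot = ps_top oc" using inv ps_top_in Ntop by metis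
  have SX: "S V0 \<subseteq> ?X" using SubClop_comp(1)[OF S V0] .
  define T :: "'a presheaf" where "T = (\<lambda>V. if V = V0 then ?X - S V0 else {})"
  have "openin (stone_top V0) (topspace (stone_top V0) - S V0)"
    by (rule openin_diff[OF openin_topspace SubClop_comp(3)[OF S V0]])
  moreover have "closedin (stone_top V0) (topspace (stone_top V0) - S V0)"
    by (rule closedin_diff[OF closedin_topspace SubClop_comp(2)[OF S V0]])
  ultimately have TC: "T \<in> SubClop oc" unfolding T_def
    by (intro single_mk[OF V0 uniq]) (use ts in auto)
  have NS: "?N S \<in> SubClop oc" and NT: "?N T \<in> SubClop oc" using closed S TC by auto
  have NTS: "?N T V0 \<subseteq> S V0" using disj[OF TC] SubClop_comp(1)[OF NT V0] unfolding T_def by auto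
  define U :: "'a presheaf" where "U = (\<lambda>V. if V = V0 then ?N S V0 \<union> ?N T V0 else {})"
  have UC: "U \<in> SubClop oc" unfolding U_def
    by (rule single_mk[OF V0 uniq]) (use SubClop_comp[OF NS V0] SubClop_comp[OF NT V0] in auto)
  have "?N S \<le> U" "?N T \<le> U" using single_le[OF NS UC uniq] single_le[OF NT UC uniq] unfolding U_def by auto
  then have "?N U \<le> ?N (?N S)" "?N U \<le> ?N (?N T)" using anti NS NT UC by auto
  then have "?N U \<le> S" "?N U \<le> T" using inv S TC by auto
  then have "?N U V0 \<subseteq> S V0 \<inter> (?X - S V0)" unfolding T_def le_fun_def by (metis (full_types) le_inf_iff)
  then have "?N U V0 = {}" by auto
  moreover have NU: "?N U \<in> SubClop oc" using closed UC by auto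
  ultimately have "?N U = ps_bot" using single_eq[OF NU uniq] unfolding ps_bot_def by (metis (full_types))
  then have "U = ps_top oc" using inv UC Nbot by metis
  then have "?N S V0 \<union> ?N T V0 = ?X" using fun_cong[of U "ps_top oc" V0] V0 unfolding U_def ps_top_def by simp
  then have "?X - S V0 \<subseteq> ?N S V0" using NTS by auto
  moreover have "?N S V0 \<subseteq> ?X" using SubClop_comp(1)[OF NS V0] .
  ultimately show ?thesis using disj[OF S] SX by auto
qed


lemma core_circ:
  fixes oc :: "'a::complete_lattice \<Rightarrow> 'a"
  assumes oc: "ortho_compl oc" and V0: "V0 \<in> Vc oc" and uniq: "\<forall>V\<in>Vc oc. V = V0"
   and closed: "\<forall>S\<in>SubClop oc. circ oc S \<in> SubClop oc"
   and anti: "\<forall>S\<in>SubClop oc. \<forall>T\<in>SubClop oc. S \<le> T \<longrightarrow> circ oc T \<le> circ oc S"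
   and inv: "\<forall>S\<in>SubClop oc. circ oc (circ oc S) = S"
   and S: "S \<in> SubClop oc"
  shows "S V0 \<inter> circ oc S V0 = {} \<and> S V0 \<union> circ oc S V0 = sp V0"
proof -
  let ?X = "sp V0"
  let ?N = "circ oc"
  have ts: "topspace (stone_top V0) = ?X" using topspace_stone[OF Vc_props(2)[OF V0]] .
  have rep: "\<exists>x\<in>V0. R V0 = kappa V0 x" if R: "R \<in> SubClop oc" for R
  proof -
    define c where "c = oc (eps_in oc (?N R))"
    have "R = dasein_in oc c" using inv R unfolding c_def circ_def by metis
    then have "R V0 = kappa V0 (Sup {b \<in> V0. b \<le> c})" using V0 unfolding dasein_in_def by simp
    moreover have "Sup {b \<in> V0. b \<le> c} \<in> V0" by (rule Vc_props(5)[OF V0]) auto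
    ultimately show ?thesis by blast
  qed
  have cover: "?X - R V0 \<subseteq> ?N R V0" if R: "R \<in> SubClop oc" for R
  proof -
    obtain x where xV: "x \<in> V0" and Rx: "R V0 = kappa V0 x" using rep[OF R] by blast
    have "R \<le> dasein_in oc x"
    proof (rule le_funI)
      fix V show "R V \<le> dasein_in oc x V"
      proof (cases "V \<in> Vc oc")
        case True then have "V = V0" using uniq by blast
        then show ?thesis using True Rx Sup_self[OF xV] unfolding dasein_in_def by simp
      next
        case False then show ?thesis using R unfolding SubClop_def by simp
      qed
    qed
    then have "eps_in oc R \<le> x" unfolding eps_in_def by (auto intro: Inf_lower)
    then have "oc x \<le> oc (eps_in oc R)" using oc_facts(3)[OF oc] by blast
    then have "oc x \<le> Sup {b \<in> V0. b \<le> oc (eps_in oc R)}"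
      using Vc_props(3)[OF V0 xV] by (auto intro: Sup_upper)
    then have "kappa V0 (oc x) \<subseteq> ?N R V0" unfolding circ_def dasein_in_def using V0
      by (simp add: kappa_mono Vc_props(3)[OF V0 xV] Vc_props(5)[OF V0])
    then show ?thesis using kappa_oc[OF oc V0 xV] Rx by auto
  qed
  have Nbot: "?N ps_bot = ps_top oc"
  proof
    fix V
    have "\<And>a. ps_bot \<le> dasein_in oc a" unfolding ps_bot_def le_fun_def by auto
    then have "eps_in oc ps_bot = bot" unfolding eps_in_def
      by (metis (mono_tags, lifting) Inf_lower mem_Collect_eq bot.extremum_unique)
    then have "oc (eps_in oc ps_bot) = top" using oc_facts(2)[OF oc] by simp
    moreover have "\<And>W. W \<in> Vc oc \<Longrightarrow> Sup {b \<in> W. b \<le> top} = top" using Sup_self Vc_props(2) by metis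
    ultimately show "?N ps_bot V = ps_top oc V" unfolding circ_def dasein_in_def ps_top_def
      by (simp add: kappa_top)
  qed
  have Ntop: "?N (ps_top oc) = ps_bot" using inv ps_bot_in Nbot by metis
  have SX: "S V0 \<subseteq> ?X" using SubClop_comp(1)[OF S V0] .
  define T :: "'a presheaf" where "T = (\<lambda>V. if V = V0 then ?X - S V0 else {})"
  have "openin (stone_top V0) (topspace (stone_top V0) - S V0)"
    by (rule openin_diff[OF openin_topspace SubClop_comp(3)[OF S V0]])
  moreover have "closedin (stone_top V0) (topspace (stone_top V0) - S V0)"
    by (rule closedin_diff[OF closedin_topspace SubClop_comp(2)[OF S V0]])
  ultimately have TC: "T \<in> SubClop oc" unfolding T_def
    by (intro single_mk[OF V0 uniq]) (use ts in auto)
  have NS: "?N S \<in> SubClop oc" and NT: "?N T \<in> SubClop oc" using closed S TC by auto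
  have NTS: "S V0 \<subseteq> ?N T V0" using cover[OF TC] SX unfolding T_def by auto
  define U :: "'a presheaf" where "U = (\<lambda>V. if V = V0 then ?N S V0 \<inter> ?N T V0 else {})"
  have UC: "U \<in> SubClop oc" unfolding U_def
    by (rule single_mk[OF V0 uniq]) (use SubClop_comp[OF NS V0] SubClop_comp[OF NT V0] in auto)
  have "U \<le> ?N S" "U \<le> ?N T" using single_le[OF UC NS uniq] single_le[OF UC NT uniq] unfolding U_def by auto
  then have "?N (?N S) \<le> ?N U" "?N (?N T) \<le> ?N U" using anti NS NT UC by auto
  then have "S \<le> ?N U" "T \<le> ?N U" using inv S TC by auto
  then have "S V0 \<union> (?X - S V0) \<subseteq> ?N U V0" unfolding T_def le_fun_def by (metis (full_types) Un_least)
  moreover have NU: "?N U \<in> SubClop oc" using closed UC by auto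
  ultimately have "?N U V0 = ?X" using SubClop_comp(1)[OF NU V0] by auto
  then have "?N U = ps_top oc" using single_eq[OF NU uniq] single_eq[OF ps_top_in uniq] V0
    unfolding ps_top_def by (metis (full_types))
  then have "U = ps_bot" using inv UC Ntop by metis
  then have "?N S V0 \<inter> ?N T V0 = {}" using fun_cong[of U ps_bot V0] unfolding U_def ps_bot_def by simp
  then have "S V0 \<inter> ?N S V0 = {}" using NTS by auto
  moreover have "?N S V0 \<subseteq> ?X" using SubClop_comp(1)[OF NS V0] .
  ultimately show ?thesis using cover[OF S] SX by auto
qed




lemma bool_imp_dm:
  assumes B: "boolean_lattice_on C le m j b t n"
  shows "de_morgan_algebra C le m j n"
proof -
  have d: "distrib_lattice_on C le m j" and c: "\<forall>x\<in>C. n x \<in> C"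
    and a: "\<forall>x\<in>C. \<forall>y\<in>C. le x y \<longrightarrow> le (n y) (n x)"
    and i: "\<forall>x\<in>C. n (n x) = x"
    using B unfolding boolean_lattice_on_def by blast+
  have r: "\<forall>x\<in>C. le x x" using d unfolding distrib_lattice_on_def lattice_on_def by blast
  have "\<forall>x\<in>C. le x (n (n x))" "\<forall>x\<in>C. le (n (n x)) x" using r i by metis+
  then show ?thesis unfolding de_morgan_algebra_def using d c a by blast
qed

lemma dm_imp_bool:
  fixes oc :: "'a::complete_lattice \<Rightarrow> 'a" and N :: "'a presheaf \<Rightarrow> 'a presheaf"
  assumes oc: "ortho_compl oc"
    and DM: "de_morgan_algebra (SubClop oc) (\<le>) ps_meet ps_join N"
    and red: "\<And>V1 V2. (\<forall>S\<in>SubClop oc. N (N S) = S) \<Longrightarrow> V1 \<in> Vc oc \<Longrightarrow> V2 \<in> Vc oc \<Longrightarrow> \<not> V2 \<subseteq> V1 \<Longrightarrow> False"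
    and core: "\<And>V0 S. V0 \<in> Vc oc \<Longrightarrow> \<forall>V\<in>Vc oc. V = V0 \<Longrightarrow>
        \<forall>S\<in>SubClop oc. N S \<in> SubClop oc \<Longrightarrow>
        \<forall>S\<in>SubClop oc. \<forall>T\<in>SubClop oc. S \<le> T \<longrightarrow> N T \<le> N S \<Longrightarrow>
        \<forall>S\<in>SubClop oc. N (N S) = S \<Longrightarrow> S \<in> SubClop oc \<Longrightarrow>
        S V0 \<inter> N S V0 = {} \<and> S V0 \<union> N S V0 = sp V0"
  shows "boolean_lattice_on (SubClop oc) (\<le>) ps_meet ps_join ps_bot (ps_top oc) N"
proof -
  have dist: "distrib_lattice_on (SubClop oc) (\<le>) ps_meet ps_join"
    and closed: "\<forall>S\<in>SubClop oc. N S \<in> SubClop oc"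
    and anti: "\<forall>S\<in>SubClop oc. \<forall>T\<in>SubClop oc. S \<le> T \<longrightarrow> N T \<le> N S"
    and l1: "\<forall>S\<in>SubClop oc. S \<le> N (N S)" and l2: "\<forall>S\<in>SubClop oc. N (N S) \<le> S"
    using DM unfolding de_morgan_algebra_def by auto
  have inv: "\<forall>S\<in>SubClop oc. N (N S) = S" using l1 l2 by (auto intro: antisym)
  have uniq: "\<forall>V1\<in>Vc oc. \<forall>V2\<in>Vc oc. V1 = V2" using red[OF inv] by blast
  have bounds: "\<forall>S\<in>SubClop oc. ps_bot \<le> S \<and> S \<le> ps_top oc"
    unfolding SubClop_def ps_bot_def ps_top_def le_fun_def by auto
  have comp: "ps_meet S (N S) = ps_bot \<and> ps_join S (N S) = ps_top oc" if S: "S \<in> SubClop oc" for S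
  proof -
    have NS: "N S \<in> SubClop oc" using closed S by blast
    have "ps_meet S (N S) V = ps_bot V \<and> ps_join S (N S) V = ps_top oc V" for V
    proof (cases "V \<in> Vc oc")
      case True
      have u: "\<forall>W\<in>Vc oc. W = V" using uniq True by blast
      have c: "S V \<inter> N S V = {} \<and> S V \<union> N S V = sp V"
        using core[OF True u closed anti inv S] .
      have ts: "topspace (stone_top V) = sp V" using topspace_stone[OF Vc_props(2)[OF True]] .
      show ?thesis unfolding ps_meet_def ps_join_def ps_bot_def ps_top_def
        using c ts True closure_of_topspace[of "stone_top V"] by simp
    next
      case False
      then have "S V = {}" "N S V = {}" using S NS unfolding SubClop_def by auto
      then show ?thesis using False unfolding ps_meet_def ps_join_def ps_bot_def ps_top_def by simp
    qed
    then show ?thesis by auto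
  qed
  have m: "\<forall>S\<in>SubClop oc. ps_meet S (N S) = ps_bot" and j: "\<forall>S\<in>SubClop oc. ps_join S (N S) = ps_top oc"
    using comp by blast+
  show ?thesis unfolding boolean_lattice_on_def
    using dist ps_bot_in[of oc] ps_top_in[of oc] bounds closed anti inv m j by (intro conjI) assumption+
qed

theorem proposition8p1:
  fixes oc :: "'a::complete_lattice \<Rightarrow> 'a"
  assumes "ortho_compl oc"
  shows "(de_morgan_algebra (SubClop oc) (\<le>) ps_meet ps_join (bullet oc) \<longleftrightarrow>
            boolean_lattice_on (SubClop oc) (\<le>) ps_meet ps_join ps_bot (ps_top oc) (bullet oc)) \<and>
         (de_morgan_algebra (SubClop oc) (\<le>) ps_meet ps_join (circ oc) \<longleftrightarrow>
            boolean_lattice_on (SubClop oc) (\<le>) ps_meet ps_join ps_bot (ps_top oc) (circ oc))"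
proof (intro conjI iffI)
  assume "de_morgan_algebra (SubClop oc) (\<le>) ps_meet ps_join (bullet oc)"
  then show "boolean_lattice_on (SubClop oc) (\<le>) ps_meet ps_join ps_bot (ps_top oc) (bullet oc)"
    by (rule dm_imp_bool[of oc "bullet oc", OF assms _ red_bullet[OF assms] core_bullet[OF assms]])
next
  assume "de_morgan_algebra (SubClop oc) (\<le>) ps_meet ps_join (circ oc)"
  then show "boolean_lattice_on (SubClop oc) (\<le>) ps_meet ps_join ps_bot (ps_top oc) (circ oc)"
    by (rule dm_imp_bool[of oc "circ oc", OF assms _ red_circ[OF assms] core_circ[OF assms]])
next
  assume "boolean_lattice_on (SubClop oc) (\<le>) ps_meet ps_join ps_bot (ps_top oc) (bullet oc)"
  then show "de_morgan_algebra (SubClop oc) (\<le>) ps_meet ps_join (bullet oc)" by (rule bool_imp_dm)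
next
  assume "boolean_lattice_on (SubClop oc) (\<le>) ps_meet ps_join ps_bot (ps_top oc) (circ oc)"
  then show "de_morgan_algebra (SubClop oc) (\<le>) ps_meet ps_join (circ oc)" by (rule bool_imp_dm)
qed

end
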